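(* Let $G$ be a simple connected graph with $n$ vertices and $m$ edges, let $k\ge1$ be an integer, let $S_k(G)$ be the $k$-parallel subdivision graph of $G$, and let $N$ be the set of new (subdivision) vertices of $S_k(G)$. Let $i\neq j$ be vertices of $S_k(G)$. Then: (1) If $i,j\in V(G)$, then $\Omega_{ij}(S_k(G))=\frac{2}{k}\Omega_{ij}(G)$. (2) If $i\in N$, $j\in V(G)$ and the neighbours of $i$ in $S_k(G)$ are $s,t$, then $\Omega_{ij}(S_k(G))=\frac{k+2\Omega_{sj}(G)+2\Omega_{tj}(G)-\Omega_{st}(G)}{2k}$. (3) If $i,j\in N$, the neighbours of $i$ are $s,t$ and the neighbours of $j$ are $p,q$, then $\Omega_{ij}(S_k(G))=\frac{2k+\Omega_{sp}(G)+\Omega_{sq}(G)+\Omega_{tp}(G)+\Omega_{tq}(G)-\Omega_{pq}(G)-\Omega_{st}(G)}{2k}$.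
   Context: The $k$-parallel subdivision graph $S_k(G)$ is obtained from $G$ by replacing each edge $uv$ of $G$ by $k$ internally disjoint paths $u-w-v$ of length $2$ (each with its own new middle vertex $w$, whose neighbours are $u$ and $v$). $\Omega_{ab}(H)$ denotes the resistance distance between vertices $a,b$ of a connected graph $H$, i.e. the effective resistance between $a$ and $b$ when each edge of $H$ is a unit resistor ($\Omega_{aa}(H)=0$). *)

theory Defs
  imports Main "HOL.Real"
begin

definition simple_graph :: "'a set \<Rightarrow> ('a \<Rightarrow> 'a \<Rightarrow> bool) \<Rightarrow> bool" where
  "simple_graph V E \<longleftrightarrow> finite V \<and> (\<forall>u v. E u v \<longrightarrow> u \<in> V \<and> v \<in> V)
     \<and> (\<forall>u v. E u v \<longrightarrow> E v u) \<and> (\<forall>u. \<not> E u u)"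

definition connected_graph :: "'a set \<Rightarrow> ('a \<Rightarrow> 'a \<Rightarrow> bool) \<Rightarrow> bool" where
  "connected_graph V E \<longleftrightarrow> V \<noteq> {} \<and> (\<forall>u\<in>V. \<forall>v\<in>V. E\<^sup>*\<^sup>* u v)"

definition laplacian :: "'a set \<Rightarrow> ('a \<Rightarrow> 'a \<Rightarrow> bool) \<Rightarrow> ('a \<Rightarrow> real) \<Rightarrow> 'a \<Rightarrow> real" where
  "laplacian V E x u = (\<Sum>v\<in>{v\<in>V. E u v}. x u - x v)"

text \<open>Resistance distance (effective resistance with unit resistors): inject a unit
  current at a and extract it at b; by Kirchhoff's laws the vertex potentials x satisfy
  L x = e_a - e_b, and the resistance is the potential difference x a - x b
  (well defined on a connected graph, since x is unique up to an additive constant).\<close>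
definition resistance :: "'a set \<Rightarrow> ('a \<Rightarrow> 'a \<Rightarrow> bool) \<Rightarrow> 'a \<Rightarrow> 'a \<Rightarrow> real" where
  "resistance V E a b =
     (let x = (SOME x. \<forall>u\<in>V. laplacian V E x u =
                  (if u = a then 1 else 0) - (if u = b then 1 else 0))
      in x a - x b)"

definition graph_edges :: "'a set \<Rightarrow> ('a \<Rightarrow> 'a \<Rightarrow> bool) \<Rightarrow> 'a set set" where
  "graph_edges V E = {{u, v} | u v. E u v}"

text \<open>k-parallel subdivision graph S_k(G): old vertices Inl u; for each edge e of G
  and each r < k a new vertex Inr (e, r) adjacent exactly to the two ends of e.\<close>
definition sk_new :: "'a set \<Rightarrow> ('a \<Rightarrow> 'a \<Rightarrow> bool) \<Rightarrow> nat \<Rightarrow> ('a + 'a set \<times> nat) set" where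
  "sk_new V E k = {Inr (e, r) | e r. e \<in> graph_edges V E \<and> r < k}"

definition sk_verts :: "'a set \<Rightarrow> ('a \<Rightarrow> 'a \<Rightarrow> bool) \<Rightarrow> nat \<Rightarrow> ('a + 'a set \<times> nat) set" where
  "sk_verts V E k = Inl ` V \<union> sk_new V E k"

fun sk_adj :: "'a set \<Rightarrow> ('a \<Rightarrow> 'a \<Rightarrow> bool) \<Rightarrow> nat \<Rightarrow> ('a + 'a set \<times> nat) \<Rightarrow> ('a + 'a set \<times> nat) \<Rightarrow> bool" where
  "sk_adj V E k (Inl u) (Inr (e, r)) = (e \<in> graph_edges V E \<and> r < k \<and> u \<in> e)"
| "sk_adj V E k (Inr (e, r)) (Inl u) = (e \<in> graph_edges V E \<and> r < k \<and> u \<in> e)"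
| "sk_adj V E k _ _ = False"

end

theory Submission
  imports Defs Complex_Main "HOL-Library.Function_Algebras"
begin

context vector_space begin
lemma inj_on_subspace_surj:
  assumes lf: "Vector_Spaces.linear scale scale f" and S: "subspace S" and W: "S \<subseteq> span W" "finite W"
    and fS: "f ` S \<subseteq> S" and inj: "inj_on f S"
  shows "S \<subseteq> f ` S"
proof -
  obtain B where B: "B \<subseteq> S" "independent B" "S \<subseteq> span B"
    using basis_exists by metis
  have fB: "finite B" using independent_span_bound[OF W(2) B(2)] B(1) W(1) by (meson subset_trans)
  have spB: "span B \<subseteq> S" using span_minimal[OF B(1) S] .
  interpret lf: Vector_Spaces.linear scale scale f by fact
  have injB: "inj_on f (span B)" using inj spB by (rule inj_on_subset)
  have indC: "independent (f ` B)" using lf.dependent_inj_imageD[OF _ injB] B(2) by metis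
  have cardC: "card (f ` B) = card B" using card_image inj_on_subset[OF injB span_superset] by metis
  have CS: "f ` B \<subseteq> span B" using B(1) fS B(3) by (meson image_mono subset_trans)
  have "B \<subseteq> span (f ` B)"
  proof
    fix b assume b: "b \<in> B"
    show "b \<in> span (f ` B)"
    proof (rule ccontr)
      assume nb: "b \<notin> span (f ` B)"
      then have nb2: "b \<notin> f ` B" using span_base by metis
      have ind2: "independent (insert b (f ` B))" using independent_insertI[OF nb indC] .
      have "insert b (f ` B) \<subseteq> span B" using CS b span_superset by (simp add: span_base)
      from independent_span_bound[OF fB ind2 this]
      have "card (insert b (f ` B)) \<le> card B" by (rule conjunct2)
      moreover have "card (insert b (f ` B)) = Suc (card B)"
        using nb2 fB cardC by simp
      ultimately show False by simp
    qed
  qed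
  then have "span B \<subseteq> span (f ` B)" by (rule span_minimal) (simp add: subspace_span)
  also have "\<dots> = f ` span B" by (rule lf.span_image)
  also have "\<dots> \<subseteq> f ` S" using spB by (rule image_mono)
  finally show ?thesis using B(3) by (rule subset_trans[rotated])
qed
end

lemma lap_add: "laplacian V E (\<lambda>u. f u + g u) u = laplacian V E f u + laplacian V E g u"
  unfolding laplacian_def sum.distrib[symmetric] by (rule sum.cong) auto

lemma lap_diff: "laplacian V E (\<lambda>u. f u - g u) u = laplacian V E f u - laplacian V E g u"
  unfolding laplacian_def sum_subtractf[symmetric] by (rule sum.cong) auto

lemma lap_scale: "laplacian V E (\<lambda>u. c * f u) u = c * laplacian V E f u"
  unfolding laplacian_def sum_distrib_left by (rule sum.cong) (auto simp: algebra_simps)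

lemma lap_const: "laplacian V E (\<lambda>u. c) u = 0"
  by (simp add: laplacian_def)

lemma harmonic_const:
  assumes fin: "finite V" and edges: "\<And>u v. E u v \<Longrightarrow> v \<in> V" and conn: "connected_graph V E"
    and h: "\<forall>u\<in>V. laplacian V E z u = 0" and a: "a \<in> V" and b: "b \<in> V"
  shows "z a = z b"
proof -
  have ne: "V \<noteq> {}" using a by blast
  define M where "M = Max (z ` V)"
  have "M \<in> z ` V" unfolding M_def using fin ne by simp
  then obtain m where m: "m \<in> V" "z m = M" by blast
  have le: "\<And>v. v \<in> V \<Longrightarrow> z v \<le> M" unfolding M_def by (rule Max_ge) (use fin in auto)
  have step: "\<And>v. E\<^sup>*\<^sup>* m v \<Longrightarrow> v \<in> V \<and> z v = M"
  proof -
    fix v assume "E\<^sup>*\<^sup>* m v"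
    then show "v \<in> V \<and> z v = M"
    proof (induction rule: rtranclp_induct)
      case base then show ?case using m by simp
    next
      case (step w v)
      have vV: "v \<in> V" using edges step(2) .
      have fin2: "finite {x\<in>V. E w x}" using fin by simp
      have nn: "\<forall>x\<in>{x\<in>V. E w x}. 0 \<le> z w - z x"
      proof
        fix x assume "x \<in> {x\<in>V. E w x}"
        then have "z x \<le> M" using le by blast
        then show "0 \<le> z w - z x" using step(3) by linarith
      qed
      have "laplacian V E z w = 0" using h step(3) by blast
      then have "(\<Sum>x\<in>{x\<in>V. E w x}. z w - z x) = 0" unfolding laplacian_def .
      moreover have "(\<Sum>x\<in>{x\<in>V. E w x}. z w - z x) = 0 \<longleftrightarrow> (\<forall>x\<in>{x\<in>V. E w x}. z w - z x = 0)"
        by (rule sum_nonneg_eq_0_iff[OF fin2]) (use nn in blast)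
      ultimately have "\<forall>x\<in>{x\<in>V. E w x}. z w - z x = 0" by blast
      then have "z w - z v = 0" using vV step(2) by blast
      then show ?case using vV step(3) by simp
    qed
  qed
  have "E\<^sup>*\<^sup>* m a" "E\<^sup>*\<^sup>* m b" using conn a b m(1) unfolding connected_graph_def by auto
  then have "z a = M" "z b = M" using step by blast+
  then show ?thesis by simp
qed

lemma res_eq:
  assumes fin: "finite V" and edges: "\<And>u v. E u v \<Longrightarrow> v \<in> V" and conn: "connected_graph V E"
    and a: "a \<in> V" and b: "b \<in> V"
    and sol: "\<forall>u\<in>V. laplacian V E x u = (if u = a then 1 else 0) - (if u = b then 1 else 0)"
  shows "resistance V E a b = x a - x b"
proof -
  define P where "P = (\<lambda>y. \<forall>u\<in>V. laplacian V E y u = (if u = a then 1 else 0) - (if u = b then 1 else 0))"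
  define y where "y = (SOME y. P y)"
  have Py: "P y" unfolding y_def by (rule someI[of P x]) (simp add: P_def sol)
  have "\<forall>u\<in>V. laplacian V E (\<lambda>u. y u - x u) u = 0"
    using Py sol by (simp add: lap_diff P_def)
  from harmonic_const[OF fin edges conn this a b] have "y a - x a = y b - x b" .
  moreover have "resistance V E a b = y a - y b"
    unfolding resistance_def Let_def y_def P_def by simp
  ultimately show ?thesis by simp
qed

lemma lap_if: "finite V \<Longrightarrow> laplacian V E y u = (\<Sum>v\<in>V. if E u v then y u - y v else 0)"
  by (simp add: laplacian_def sum.inter_filter)

lemma green_sym:
  assumes fin: "finite V" and sym: "\<And>u v. E u v \<Longrightarrow> E v u"
  shows "(\<Sum>u\<in>V. x u * laplacian V E y u) = (\<Sum>u\<in>V. laplacian V E x u * y u)"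
proof -
  have 1: "(\<Sum>u\<in>V. x u * laplacian V E y u) = (\<Sum>u\<in>V. \<Sum>v\<in>V. if E u v then x u * y u else 0)
     - (\<Sum>u\<in>V. \<Sum>v\<in>V. if E u v then x u * y v else 0)"
    unfolding sum_subtractf[symmetric] lap_if[OF fin] sum_distrib_left
    apply (rule sum.cong[OF refl])+
    by (simp add: algebra_simps)
  have 2: "(\<Sum>u\<in>V. laplacian V E x u * y u) = (\<Sum>u\<in>V. \<Sum>v\<in>V. if E u v then x u * y u else 0)
     - (\<Sum>u\<in>V. \<Sum>v\<in>V. if E u v then x v * y u else 0)"
    unfolding sum_subtractf[symmetric] lap_if[OF fin] sum_distrib_right
    apply (rule sum.cong[OF refl])+
    by (simp add: algebra_simps)
  have 3: "(\<Sum>u\<in>V. \<Sum>v\<in>V. if E u v then x v * y u else 0) = (\<Sum>u\<in>V. \<Sum>v\<in>V. if E u v then x u * y v else 0)"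
    apply (subst sum.swap)
    apply (rule sum.cong[OF refl])+
    using sym by auto
  show ?thesis using 1 2 3 by simp
qed
lemma sum_fun_apply: "sum g A x = (\<Sum>v\<in>A. g v x)"
  by (induction A rule: infinite_finite_induct) auto

lemma exists_potential:
  assumes sg: "simple_graph V E" and conn: "connected_graph V E" and a: "a \<in> V" and b: "b \<in> V"
  shows "\<exists>x. \<forall>u\<in>V. laplacian V E x u = (if u = a then 1 else 0) - (if u = b then 1 else 0)"
proof -
  have fin: "finite V" and edges: "\<And>u v. E u v \<Longrightarrow> v \<in> V" and sym: "\<And>u v. E u v \<Longrightarrow> E v u"
    using sg unfolding simple_graph_def by auto
  define sc :: "real \<Rightarrow> ('a \<Rightarrow> real) \<Rightarrow> ('a \<Rightarrow> real)" where "sc = (\<lambda>c f x. c * f x)"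
  interpret vs: vector_space sc
    unfolding sc_def by unfold_locales (auto simp: fun_eq_iff algebra_simps)
  define r where "r = a"
  have r: "r \<in> V" using a by (simp add: r_def)
  define T where "T = (\<lambda>f::'a\<Rightarrow>real. \<lambda>u. if u \<in> V then laplacian V E f u + (if u = r then f r else 0) else 0)"
  define S where "S = {f::'a\<Rightarrow>real. \<forall>u. u \<notin> V \<longrightarrow> f u = 0}"
  define W where "W = (\<lambda>v. \<lambda>u::'a. if u = v then (1::real) else 0) ` V"
  have lin: "Vector_Spaces.linear sc sc T"
    unfolding Vector_Spaces.linear_iff
  proof (intro conjI allI)
    show "vector_space sc" by (rule vs.vector_space_axioms)
    show "vector_space sc" by (rule vs.vector_space_axioms)
    fix f g :: "'a \<Rightarrow> real"
    have "laplacian V E (f + g) u = laplacian V E f u + laplacian V E g u" for u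
      unfolding plus_fun_def by (rule lap_add)
    then show "T (f + g) = T f + T g" unfolding T_def by (auto simp: fun_eq_iff)
  next
    fix c :: real and f :: "'a \<Rightarrow> real"
    show "T (sc c f) = sc c (T f)" unfolding T_def sc_def by (auto simp: fun_eq_iff lap_scale algebra_simps)
  qed
  have sub: "vs.subspace S" by (rule vs.subspaceI) (auto simp: S_def sc_def)
  have spn: "S \<subseteq> vs.span W"
  proof
    fix f assume f: "f \<in> S"
    have "f = (\<Sum>v\<in>V. sc (f v) (\<lambda>u. if u = v then 1 else 0))"
    proof (rule ext)
      fix x
      have "(\<Sum>v\<in>V. sc (f v) (\<lambda>u. if u = v then 1 else 0)) x = (\<Sum>v\<in>V. if x = v then f v else 0)"
        unfolding sum_fun_apply sc_def by (rule sum.cong) auto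
      also have "\<dots> = f x" using f fin unfolding S_def by auto
      finally show "f x = (\<Sum>v\<in>V. sc (f v) (\<lambda>u. if u = v then 1 else 0)) x" by simp
    qed
    also have "\<dots> \<in> vs.span W"
      by (rule vs.span_sum, rule vs.span_scale, rule vs.span_base) (auto simp: W_def)
    finally show "f \<in> vs.span W" .
  qed
  have finW: "finite W" using fin by (simp add: W_def)
  have TS: "T ` S \<subseteq> S" unfolding T_def S_def by auto
  have L1: "(\<Sum>u\<in>V. laplacian V E h u) = 0" for h
  proof -
    have "(\<Sum>u\<in>V. (\<lambda>_. 1) u * laplacian V E h u) = (\<Sum>u\<in>V. laplacian V E (\<lambda>_. 1) u * h u)"
      by (rule green_sym[OF fin sym])
    then show ?thesis by (simp add: lap_const)
  qed
  have inj: "inj_on T S"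
  proof (rule inj_onI)
    fix f g assume f: "f \<in> S" and g: "g \<in> S" and eq: "T f = T g"
    define h where "h = (\<lambda>u. f u - g u)"
    have Lh: "laplacian V E h u + (if u = r then h r else 0) = 0" if u: "u \<in> V" for u
    proof -
      have "T f u = T g u" using eq by simp
      then show ?thesis using u unfolding T_def h_def lap_diff by (auto simp: algebra_simps)
    qed
    have "(\<Sum>u\<in>V. laplacian V E h u + (if u = r then h r else 0)) = 0" using Lh by simp
    then have "h r = 0" using L1[of h] r fin by (simp add: sum.distrib)
    then have Lh0: "\<forall>u\<in>V. laplacian V E h u = 0" using Lh by (metis add.right_neutral)
    have "h u = h r" if "u \<in> V" for u
      by (rule harmonic_const[OF fin edges conn Lh0 that r])
    then have "\<forall>u\<in>V. f u = g u" using \<open>h r = 0\<close> unfolding h_def by simp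
    then show "f = g" using f g unfolding S_def by (auto simp: fun_eq_iff)
  qed
  have surj: "S \<subseteq> T ` S" by (rule vs.inj_on_subspace_surj[OF lin sub spn finW TS inj])
  define y where "y = (\<lambda>u. if u \<in> V then (if u = a then 1 else 0) - (if u = b then (1::real) else 0) else 0)"
  have "y \<in> S" unfolding y_def S_def by auto
  then obtain f where f: "f \<in> S" "T f = y" using surj by blast
  have Lf: "laplacian V E f u + (if u = r then f r else 0) = (if u = a then 1 else 0) - (if u = b then 1 else 0)"
    if u: "u \<in> V" for u
  proof -
    have "T f u = y u" using f by simp
    then show ?thesis using u unfolding T_def y_def by simp
  qed
  have "(\<Sum>u\<in>V. laplacian V E f u + (if u = r then f r else 0))
      = (\<Sum>u\<in>V. (if u = a then 1 else 0) - (if u = b then (1::real) else 0))"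
    using Lf by (rule sum.cong[OF refl])
  then have "f r = 0" using L1[of f] r a b fin by (simp add: sum.distrib sum_subtractf)
  then have "laplacian V E f u = (if u = a then 1 else 0) - (if u = b then 1 else 0)" if "u \<in> V" for u
  proof -
    have "(if u = r then f r else 0) = 0" using \<open>f r = 0\<close> by simp
    then show ?thesis using Lf[OF that] by linarith
  qed
  then show ?thesis by blast
qed

lemma sk_adj_LR: "sk_adj V E k (Inl u) (Inr p) = (fst p \<in> graph_edges V E \<and> snd p < k \<and> u \<in> fst p)"
  by (cases p) simp
lemma sk_adj_RL: "sk_adj V E k (Inr p) (Inl u) = (fst p \<in> graph_edges V E \<and> snd p < k \<and> u \<in> fst p)"
  by (cases p) simp
lemma sk_adj_LL: "sk_adj V E k (Inl u) (Inl v) = False"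
  by simp
lemma sk_adj_RR: "sk_adj V E k (Inr p) (Inr q) = False"
  by (cases p; cases q) simp

lemma sk_adj_sym: "sk_adj V E k x y = sk_adj V E k y x"
  by (cases x; cases y) (simp_all only: sk_adj_LR sk_adj_RL sk_adj_LL sk_adj_RR)

lemma sk_adj_Inr: "sk_adj V E k (Inr (e, r)) w \<longleftrightarrow> (\<exists>u. w = Inl u \<and> e \<in> graph_edges V E \<and> r < k \<and> u \<in> e)"
  by (cases w) (simp_all only: sk_adj_RL sk_adj_RR, auto)

lemma sk_adj_Inl: "sk_adj V E k (Inl u) w \<longleftrightarrow> (\<exists>e r. w = Inr (e, r) \<and> e \<in> graph_edges V E \<and> r < k \<and> u \<in> e)"
  by (cases w) (simp_all only: sk_adj_LR sk_adj_LL, auto)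

lemma edge_sub:
  assumes sg: "simple_graph V E" and e: "e \<in> graph_edges V E"
  shows "\<exists>a b. e = {a, b} \<and> E a b \<and> a \<noteq> b \<and> a \<in> V \<and> b \<in> V"
proof -
  obtain a b where ab: "e = {a, b}" "E a b" using e unfolding graph_edges_def by blast
  have "a \<in> V" "b \<in> V" "\<not> E a a" using sg ab(2) unfolding simple_graph_def by blast+
  then have "a \<noteq> b" using ab(2) by metis
  then show ?thesis using ab \<open>a \<in> V\<close> \<open>b \<in> V\<close> by blast
qed

lemma sk_adj_in:
  assumes sg: "simple_graph V E" and adj: "sk_adj V E k x y"
  shows "x \<in> sk_verts V E k"
proof (cases x)
  case (Inl u)
  have "sk_adj V E k (Inl u) y" using adj Inl by simp
  then obtain e r where er: "y = Inr (e, r)" "e \<in> graph_edges V E" "r < k" "u \<in> e"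
    unfolding sk_adj_Inl by blast
  obtain a b where "e = {a, b}" "a \<in> V" "b \<in> V" using edge_sub[OF sg er(2)] by blast
  then have "u \<in> V" using er(4) by blast
  then show ?thesis using Inl unfolding sk_verts_def by blast
next
  case (Inr p)
  then obtain e r where p: "x = Inr (e, r)" by (cases p) auto
  then have "e \<in> graph_edges V E" "r < k" using adj unfolding p sk_adj_Inr by blast+
  then show ?thesis unfolding p sk_verts_def sk_new_def by blast
qed

lemma ge_fin:
  assumes sg: "simple_graph V E"
  shows "finite (graph_edges V E)"
proof -
  have "e \<in> Pow V" if ee: "e \<in> graph_edges V E" for e
  proof -
    obtain a b where "e = {a, b}" "a \<in> V" "b \<in> V" using edge_sub[OF sg ee] by blast
    then show ?thesis by simp
  qed
  then have "graph_edges V E \<subseteq> Pow V" by blast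
  moreover have "finite V" using sg unfolding simple_graph_def by blast
  ultimately show ?thesis using finite_subset by blast
qed

lemma sk_fin:
  assumes sg: "simple_graph V E"
  shows "finite (sk_verts V E k)"
proof -
  have "sk_new V E k \<subseteq> Inr ` (graph_edges V E \<times> {..<k})" unfolding sk_new_def by auto
  moreover have "finite (Inr ` (graph_edges V E \<times> {..<k}))" using ge_fin[OF sg] by simp
  ultimately have "finite (sk_new V E k)" by (rule finite_subset)
  moreover have "finite V" using sg unfolding simple_graph_def by blast
  ultimately show ?thesis unfolding sk_verts_def by simp
qed

lemma sk_conn:
  assumes sg: "simple_graph V E" and conn: "connected_graph V E" and k: "k \<ge> 1"
  shows "connected_graph (sk_verts V E k) (sk_adj V E k)"
proof -
  let ?A = "sk_adj V E k"
  have old: "?A\<^sup>*\<^sup>* (Inl a) (Inl b)" if "E\<^sup>*\<^sup>* a b" for a b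
    using that
  proof (induction rule: rtranclp_induct)
    case base then show ?case by simp
  next
    case (step w v)
    have ed: "{w, v} \<in> graph_edges V E" using step(2) unfolding graph_edges_def by blast
    have a1: "?A (Inl w) (Inr ({w,v}, 0))" using ed k by simp
    have a2: "?A (Inr ({w,v}, 0)) (Inl v)" using ed k by simp
    show ?case by (rule rtranclp.rtrancl_into_rtrancl[OF rtranclp.rtrancl_into_rtrancl[OF step(3) a1] a2])
  qed
  have anchor: "\<exists>u\<in>V. ?A\<^sup>*\<^sup>* x (Inl u) \<and> ?A\<^sup>*\<^sup>* (Inl u) x" if x: "x \<in> sk_verts V E k" for x
  proof (cases "x \<in> Inl ` V")
    case True then show ?thesis by blast
  next
    case False
    then obtain e r where xe: "x = Inr (e, r)" "e \<in> graph_edges V E" "r < k"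
      using x unfolding sk_verts_def sk_new_def by blast
    then obtain a b where ab: "e = {a, b}" "a \<in> V" using edge_sub[OF sg] by blast
    have a1: "?A x (Inl a)" and a2: "?A (Inl a) x" using xe ab(1) by simp_all
    have "?A\<^sup>*\<^sup>* x (Inl a)" "?A\<^sup>*\<^sup>* (Inl a) x" using r_into_rtranclp[of ?A, OF a1] r_into_rtranclp[of ?A, OF a2] by auto
    then show ?thesis using ab(2) by blast
  qed
  have ne: "V \<noteq> {}" using conn unfolding connected_graph_def by blast
  show ?thesis unfolding connected_graph_def
  proof (intro conjI ballI)
    show "sk_verts V E k \<noteq> {}" using ne unfolding sk_verts_def by blast
    fix x y assume x: "x \<in> sk_verts V E k" and y: "y \<in> sk_verts V E k"
    obtain u where u: "u \<in> V" "?A\<^sup>*\<^sup>* x (Inl u)" using anchor[OF x] by blast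
    obtain v where v: "v \<in> V" "?A\<^sup>*\<^sup>* (Inl v) y" using anchor[OF y] by blast
    have "E\<^sup>*\<^sup>* u v" using conn u v unfolding connected_graph_def by blast
    then have uv: "?A\<^sup>*\<^sup>* (Inl u) (Inl v)" by (rule old)
    show "?A\<^sup>*\<^sup>* x y" using rtranclp_trans[OF rtranclp_trans[OF u(2) uv] v(2)] .
  qed
qed

definition psi :: "('a \<Rightarrow> real) \<Rightarrow> ('a + 'a set \<times> nat \<Rightarrow> real) \<Rightarrow> 'a + 'a set \<times> nat \<Rightarrow> real" where
  "psi p0 d w = (case w of Inl u \<Rightarrow> p0 u | Inr (e, r) \<Rightarrow> (\<Sum>x\<in>e. p0 x) / 2 + d w)"

lemma psi_Inl: "psi p0 d (Inl u) = p0 u" by (simp add: psi_def)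
lemma psi_Inr: "psi p0 d (Inr (e, r)) = (\<Sum>x\<in>e. p0 x) / 2 + d (Inr (e, r))" by (simp add: psi_def)

lemma nbr_old:
  assumes sg: "simple_graph V E" and u: "u \<in> V"
  shows "{w \<in> sk_verts V E k. sk_adj V E k (Inl u) w} = (\<lambda>(v,r). Inr ({u,v}, r)) ` ({v\<in>V. E u v} \<times> {..<k})"
proof (rule set_eqI iffI)+
  fix w assume "w \<in> {w \<in> sk_verts V E k. sk_adj V E k (Inl u) w}"
  then have "sk_adj V E k (Inl u) w" by blast
  then obtain e r where er: "w = Inr (e, r)" "e \<in> graph_edges V E" "r < k" "u \<in> e"
    unfolding sk_adj_Inl by blast
  obtain a b where ab: "e = {a, b}" "E a b" "a \<noteq> b" "a \<in> V" "b \<in> V" using edge_sub[OF sg er(2)] by blast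
  have symE: "E b a" using sg ab(2) unfolding simple_graph_def by blast
  have "\<exists>v. e = {u, v} \<and> E u v \<and> v \<in> V"
  proof (cases "u = a")
    case True then show ?thesis using ab by blast
  next
    case False then have "u = b" using er(4) ab(1) by blast
    then show ?thesis using ab symE by (intro exI[of _ a]) auto
  qed
  then obtain v where v: "e = {u, v}" "E u v" "v \<in> V" by blast
  show "w \<in> (\<lambda>(v,r). Inr ({u,v}, r)) ` ({v\<in>V. E u v} \<times> {..<k})"
    by (rule image_eqI[where x="(v, r)"]) (use er v in auto)
next
  fix w :: "'a + 'a set \<times> nat" assume "w \<in> (\<lambda>(v,r). Inr ({u,v}, r)) ` ({v\<in>V. E u v} \<times> {..<k})"
  then obtain x where x: "x \<in> {v\<in>V. E u v} \<times> {..<k}" "w = (\<lambda>(v,r). Inr ({u,v}, r)) x" by blast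
  obtain v r where "x = (v, r)" by (cases x)
  then have vr: "w = Inr ({u,v}, r)" "v \<in> V" "E u v" "r < k" using x by auto
  have ge: "{u, v} \<in> graph_edges V E" using vr(3) unfolding graph_edges_def by blast
  then have "w \<in> sk_new V E k" using vr unfolding sk_new_def by blast
  moreover have "sk_adj V E k (Inl u) w" using vr ge by simp
  ultimately show "w \<in> {w \<in> sk_verts V E k. sk_adj V E k (Inl u) w}" unfolding sk_verts_def by blast
qed

lemma nbr_inj:
  assumes sg: "simple_graph V E"
  shows "inj_on (\<lambda>(v,r). Inr ({u,v}, r)) ({v\<in>V. E u v} \<times> {..<k})"
proof (rule inj_onI)
  fix x y assume x: "x \<in> {v\<in>V. E u v} \<times> {..<k}" and y: "y \<in> {v\<in>V. E u v} \<times> {..<k}"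
    and eq: "(\<lambda>(v,r). Inr ({u,v}, r)) x = (\<lambda>(v,r). Inr ({u,v}, r)) y"
  obtain v r where xv: "x = (v, r)" by (cases x)
  obtain v' r' where yv: "y = (v', r')" by (cases y)
  have "E u v" "E u v'" using x y xv yv by auto
  then have "u \<noteq> v" "u \<noteq> v'" using sg unfolding simple_graph_def by metis+
  have "{u, v} = {u, v'}" "r = r'" using eq xv yv by auto
  then have "v = v'" using \<open>u \<noteq> v\<close> \<open>u \<noteq> v'\<close> by (metis doubleton_eq_iff)
  then show "x = y" using xv yv \<open>r = r'\<close> by simp
qed

lemma lapS_old:
  assumes sg: "simple_graph V E" and u: "u \<in> V"
  shows "laplacian (sk_verts V E k) (sk_adj V E k) (psi p0 d) (Inl u)
     = real k / 2 * laplacian V E p0 u - (\<Sum>w\<in>{w \<in> sk_verts V E k. sk_adj V E k (Inl u) w}. d w)"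
proof -
  let ?N = "{w \<in> sk_verts V E k. sk_adj V E k (Inl u) w}"
  let ?A = "{v\<in>V. E u v} \<times> {..<k}"
  have 1: "laplacian (sk_verts V E k) (sk_adj V E k) (psi p0 d) (Inl u)
      = (\<Sum>w\<in>?N. (p0 u - psi p0 (\<lambda>_. 0) w) - d w)"
    unfolding laplacian_def
  proof (rule sum.cong[OF refl])
    fix w assume "w \<in> ?N"
    then have "sk_adj V E k (Inl u) w" by blast
    then obtain e r where "w = Inr (e, r)" unfolding sk_adj_Inl by blast
    then show "psi p0 d (Inl u) - psi p0 d w = (p0 u - psi p0 (\<lambda>_. 0) w) - d w"
      by (simp add: psi_Inl psi_Inr)
  qed
  have 2: "(\<Sum>w\<in>?N. (p0 u - psi p0 (\<lambda>_. 0) w) - d w) = (\<Sum>w\<in>?N. p0 u - psi p0 (\<lambda>_. 0) w) - (\<Sum>w\<in>?N. d w)"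
    by (rule sum_subtractf)
  have 3: "(\<Sum>w\<in>?N. p0 u - psi p0 (\<lambda>_. 0) w) = (\<Sum>(v,r)\<in>?A. (p0 u - p0 v) / 2)"
    unfolding nbr_old[OF sg u] sum.reindex[OF nbr_inj[OF sg]]
  proof (rule sum.cong[OF refl])
    fix x assume x: "x \<in> ?A"
    obtain v r where xv: "x = (v, r)" by (cases x)
    have "E u v" using x xv by auto
    then have "u \<noteq> v" using sg unfolding simple_graph_def by metis
    then show "((\<lambda>w. p0 u - psi p0 (\<lambda>_. 0) w) \<circ> (\<lambda>(v,r). Inr ({u,v}, r))) x = (\<lambda>(v,r). (p0 u - p0 v) / 2) x"
      using xv by (simp add: psi_Inr field_simps)
  qed
  have 4: "(\<Sum>(v,r)\<in>?A. (p0 u - p0 v) / 2) = (\<Sum>v\<in>{v\<in>V. E u v}. \<Sum>r<k. (p0 u - p0 v) / 2)"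
    by (rule sum.cartesian_product[symmetric])
  have 5: "(\<Sum>v\<in>{v\<in>V. E u v}. \<Sum>r<k. (p0 u - p0 v) / 2) = real k / 2 * laplacian V E p0 u"
    unfolding laplacian_def sum_distrib_left by (rule sum.cong[OF refl]) simp
  show ?thesis using 1 2 3 4 5 by simp
qed

lemma lapS_new:
  assumes sg: "simple_graph V E" and w: "Inr (e, r) \<in> sk_new V E k"
  shows "laplacian (sk_verts V E k) (sk_adj V E k) (psi p0 d) (Inr (e, r)) = 2 * d (Inr (e, r))"
proof -
  have er: "e \<in> graph_edges V E" "r < k" using w unfolding sk_new_def by blast+
  obtain a b where ab: "e = {a, b}" "a \<noteq> b" "a \<in> V" "b \<in> V" using edge_sub[OF sg er(1)] by blast
  have N: "{w \<in> sk_verts V E k. sk_adj V E k (Inr (e, r)) w} = {Inl a, Inl b}"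
  proof (rule set_eqI iffI)+
    fix w assume "w \<in> {w \<in> sk_verts V E k. sk_adj V E k (Inr (e, r)) w}"
    then show "w \<in> {Inl a, Inl b}" unfolding sk_adj_Inr ab(1) by blast
  next
    fix w :: "'a + 'a set \<times> nat" assume "w \<in> {Inl a, Inl b}"
    then show "w \<in> {w \<in> sk_verts V E k. sk_adj V E k (Inr (e, r)) w}"
      using er ab unfolding sk_verts_def by auto
  qed
  show ?thesis unfolding laplacian_def N using ab(2) by (simp add: psi_Inl psi_Inr ab(1) field_simps)
qed

lemma S_res:
  assumes sg: "simple_graph V E" and conn: "connected_graph V E" and k: "k \<ge> 1"
    and i: "i \<in> sk_verts V E k" and j: "j \<in> sk_verts V E k"
    and hp: "\<forall>u\<in>V. laplacian V E p0 u = 2 / real k *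
       (((if Inl u = i then 1 else 0) + (if sk_adj V E k (Inl u) i then 1/2 else 0))
      - ((if Inl u = j then 1 else 0) + (if sk_adj V E k (Inl u) j then 1/2 else 0)))"
  shows "resistance (sk_verts V E k) (sk_adj V E k) i j
     = psi p0 (\<lambda>w. (if w = i then 1/2 else 0) - (if w = j then 1/2 else 0)) i
     - psi p0 (\<lambda>w. (if w = i then 1/2 else 0) - (if w = j then 1/2 else 0)) j"
proof -
  define d :: "'a + 'a set \<times> nat \<Rightarrow> real" where "d = (\<lambda>w. (if w = i then 1/2 else 0) - (if w = j then 1/2 else 0))"
  have fin: "finite (sk_verts V E k)" by (rule sk_fin[OF sg])
  have edges: "y \<in> sk_verts V E k" if "sk_adj V E k x y" for x y
    using sk_adj_in[OF sg] that sk_adj_sym by metis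
  have cn: "connected_graph (sk_verts V E k) (sk_adj V E k)" by (rule sk_conn[OF sg conn k])
  have kpos: "real k > 0" using k by simp
  have "\<forall>w\<in>sk_verts V E k. laplacian (sk_verts V E k) (sk_adj V E k) (psi p0 d) w
          = (if w = i then 1 else 0) - (if w = j then 1 else 0)"
  proof
    fix w assume w: "w \<in> sk_verts V E k"
    show "laplacian (sk_verts V E k) (sk_adj V E k) (psi p0 d) w = (if w = i then 1 else 0) - (if w = j then 1 else 0)"
    proof (cases w)
      case (Inl u)
      then have u: "u \<in> V" using w unfolding sk_verts_def sk_new_def by auto
      let ?N = "{w \<in> sk_verts V E k. sk_adj V E k (Inl u) w}"
      have finN: "finite ?N" using fin by simp
      have sd: "(\<Sum>w\<in>?N. d w) = (if sk_adj V E k (Inl u) i then 1/2 else 0) - (if sk_adj V E k (Inl u) j then 1/2 else 0)"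
      proof -
        have "(\<Sum>w\<in>?N. d w) = (\<Sum>w\<in>?N. if w = i then 1/2 else 0) - (\<Sum>w\<in>?N. if w = j then 1/2 else 0)"
          unfolding d_def by (rule sum_subtractf)
        also have "\<dots> = (if i \<in> ?N then 1/2 else 0) - (if j \<in> ?N then 1/2 else 0)"
          using finN by (simp only: sum.delta)
        also have "\<dots> = (if sk_adj V E k (Inl u) i then 1/2 else 0) - (if sk_adj V E k (Inl u) j then 1/2 else 0)"
          using i j by simp
        finally show ?thesis .
      qed
      show ?thesis unfolding Inl lapS_old[OF sg u] sd using hp u kpos by auto
    next
      case (Inr p)
      then obtain e r where p: "w = Inr (e, r)" by (cases p) auto
      then have nw: "Inr (e, r) \<in> sk_new V E k" using w unfolding sk_verts_def by auto
      show ?thesis unfolding p lapS_new[OF sg nw] by (simp add: d_def)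
    qed
  qed
  note R = res_eq[OF fin edges cn i j this]
  show ?thesis unfolding d_def[symmetric] by (rule R)
qed

lemma new_info:
  assumes sg: "simple_graph V E" and i: "i \<in> sk_new V E k" and nb: "{w. sk_adj V E k i w} = {Inl s, Inl t}"
  shows "s \<noteq> t \<and> s \<in> V \<and> t \<in> V \<and> (\<exists>r. i = Inr ({s,t}, r)) \<and> (\<forall>u. sk_adj V E k (Inl u) i \<longleftrightarrow> u = s \<or> u = t)"
proof -
  obtain e r where er: "i = Inr (e, r)" "e \<in> graph_edges V E" "r < k" using i unfolding sk_new_def by blast
  have ne: "{w. sk_adj V E k i w} = Inl ` e" unfolding er(1) sk_adj_Inr using er by auto
  have e: "e = {s, t}"
  proof (rule set_eqI)
    fix x
    have "x \<in> e \<longleftrightarrow> (Inl x :: 'a + 'a set \<times> nat) \<in> Inl ` e" by auto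
    also have "\<dots> \<longleftrightarrow> x \<in> {s, t}" using nb ne by auto
    finally show "x \<in> e \<longleftrightarrow> x \<in> {s, t}" .
  qed
  obtain a b where ab: "e = {a, b}" "a \<noteq> b" "a \<in> V" "b \<in> V" using edge_sub[OF sg er(2)] by blast
  have st: "s \<noteq> t"
  proof
    assume "s = t"
    then have "{a, b} = {s}" using e ab(1) by simp
    then show False using ab(2) by (metis doubleton_eq_iff insert_absorb2)
  qed
  have sV: "s \<in> V" "t \<in> V" using e ab by auto
  have adj: "sk_adj V E k (Inl u) i \<longleftrightarrow> u = s \<or> u = t" for u
  proof -
    have "sk_adj V E k (Inl u) i \<longleftrightarrow> Inl u \<in> {w. sk_adj V E k i w}" using sk_adj_sym by simp
    also have "\<dots> \<longleftrightarrow> u = s \<or> u = t" using nb by simp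
    finally show ?thesis .
  qed
  show ?thesis using st sV adj er(1) e by blast
qed

lemma lap_lin4: "laplacian V E (\<lambda>u. c1 * f1 u + c2 * f2 u + c3 * f3 u + c4 * f4 u) w
   = c1 * laplacian V E f1 w + c2 * laplacian V E f2 w + c3 * laplacian V E f3 w + c4 * laplacian V E f4 w"
  unfolding laplacian_def sum_distrib_left sum.distrib[symmetric] by (rule sum.cong) (auto simp: algebra_simps)

lemma sum_mult_delta: "finite A \<Longrightarrow> y \<in> A \<Longrightarrow> (\<Sum>u\<in>A. f u * (if u = y then 1 else 0)) = (f y :: real)"
proof -
  assume "finite A" "y \<in> A"
  have "(\<Sum>u\<in>A. f u * (if u = y then 1 else 0)) = (\<Sum>u\<in>A. if u = y then f u else 0)" by (rule sum.cong) auto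
  also have "\<dots> = f y" using \<open>finite A\<close> \<open>y \<in> A\<close> by (simp add: sum.delta)
  finally show ?thesis .
qed

lemma sum_mult_delta': "finite A \<Longrightarrow> y \<in> A \<Longrightarrow> (\<Sum>u\<in>A. (if u = y then 1 else 0) * f u) = (f y :: real)"
  using sum_mult_delta[of A y f] by (simp add: mult.commute)

theorem corollary4p3:
  fixes V :: "'a set" and E :: "'a \<Rightarrow> 'a \<Rightarrow> bool" and k :: nat
    and i j :: "'a + 'a set \<times> nat"
  assumes "simple_graph V E" and "connected_graph V E" and "k \<ge> 1"
    and "i \<in> sk_verts V E k" and "j \<in> sk_verts V E k" and "i \<noteq> j"
  shows "(\<forall>a b. a \<in> V \<longrightarrow> b \<in> V \<longrightarrow> i = Inl a \<longrightarrow> j = Inl b \<longrightarrow>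
            resistance (sk_verts V E k) (sk_adj V E k) i j = 2 / real k * resistance V E a b)
       \<and> (\<forall>s t b. i \<in> sk_new V E k \<longrightarrow> b \<in> V \<longrightarrow> j = Inl b \<longrightarrow>
            {w. sk_adj V E k i w} = {Inl s, Inl t} \<longrightarrow>
            resistance (sk_verts V E k) (sk_adj V E k) i j =
              (real k + 2 * resistance V E s b + 2 * resistance V E t b - resistance V E s t)
                / (2 * real k))
       \<and> (\<forall>s t p q. i \<in> sk_new V E k \<longrightarrow> j \<in> sk_new V E k \<longrightarrow>
            {w. sk_adj V E k i w} = {Inl s, Inl t} \<longrightarrow>
            {w. sk_adj V E k j w} = {Inl p, Inl q} \<longrightarrow>
            resistance (sk_verts V E k) (sk_adj V E k) i j =
              (2 * real k + resistance V E s p + resistance V E s q + resistance V E t p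
                 + resistance V E t q - resistance V E p q - resistance V E s t)
                / (2 * real k))"
proof -
  have fin: "finite V" and edges: "\<And>u v. E u v \<Longrightarrow> v \<in> V" and symE: "\<And>u v. E u v \<Longrightarrow> E v u"
    using assms(1) unfolding simple_graph_def by auto
  obtain r where r: "r \<in> V" using assms(2) unfolding connected_graph_def by blast
  define g where "g = (\<lambda>x. SOME f. \<forall>u\<in>V. laplacian V E f u = (if u = x then 1 else 0) - (if u = r then 1 else 0))"
  have g: "\<forall>u\<in>V. laplacian V E (g x) u = (if u = x then 1 else 0) - (if u = r then 1 else 0)" if x: "x \<in> V" for x
  proof -
    have ex: "\<exists>f. \<forall>u\<in>V. laplacian V E f u = (if u = x then 1 else 0) - (if u = r then 1 else 0)"
      by (rule exists_potential[OF assms(1) assms(2) x r])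
    show ?thesis unfolding g_def using someI_ex[OF ex] by simp
  qed
  have gsym: "g x y - g x r = g y x - g y r" if x: "x \<in> V" and y: "y \<in> V" for x y
  proof -
    have "(\<Sum>u\<in>V. g x u * laplacian V E (g y) u) = (\<Sum>u\<in>V. laplacian V E (g x) u * g y u)"
      by (rule green_sym[OF fin symE])
    moreover have "(\<Sum>u\<in>V. g x u * laplacian V E (g y) u)
        = (\<Sum>u\<in>V. g x u * (if u = y then 1 else 0)) - (\<Sum>u\<in>V. g x u * (if u = r then 1 else 0))"
      unfolding sum_subtractf[symmetric] using g[OF y] by (intro sum.cong) (auto simp: right_diff_distrib)
    moreover have "(\<Sum>u\<in>V. laplacian V E (g x) u * g y u)
        = (\<Sum>u\<in>V. (if u = x then 1 else 0) * g y u) - (\<Sum>u\<in>V. (if u = r then 1 else 0) * g y u)"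
      unfolding sum_subtractf[symmetric] using g[OF x] by (intro sum.cong) (auto simp: left_diff_distrib)
    ultimately show ?thesis using sum_mult_delta[OF fin] sum_mult_delta'[OF fin] x y r by simp
  qed
  have resG: "resistance V E a b = g a a - g b a - g a b + g b b" if a: "a \<in> V" and b: "b \<in> V" for a b
  proof -
    have "\<forall>u\<in>V. laplacian V E (\<lambda>u. g a u - g b u) u = (if u = a then 1 else 0) - (if u = b then 1 else 0)"
      using g[OF a] g[OF b] by (simp add: lap_diff)
    from res_eq[OF fin edges assms(2) a b this] show ?thesis by simp
  qed
  have kpos: "real k > 0" using assms(3) by simp
  have ij: "i \<in> sk_verts V E k" "j \<in> sk_verts V E k" using assms(4,5) .
  show ?thesis
  proof (intro conjI allI impI)
    fix a b assume a: "a \<in> V" and b: "b \<in> V" and ia: "i = Inl a" and jb: "j = Inl b"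
    define p0 where "p0 = (\<lambda>u. 2 / real k * g a u + (- 2 / real k) * g b u + 0 * g a u + 0 * g a u)"
    have hp: "\<forall>u\<in>V. laplacian V E p0 u = 2 / real k *
       (((if Inl u = i then 1 else 0) + (if sk_adj V E k (Inl u) i then 1/2 else 0))
      - ((if Inl u = j then 1 else 0) + (if sk_adj V E k (Inl u) j then 1/2 else 0)))"
    proof
      fix u assume u: "u \<in> V"
      show "laplacian V E p0 u = 2 / real k *
       (((if Inl u = i then 1 else 0) + (if sk_adj V E k (Inl u) i then 1/2 else 0))
      - ((if Inl u = j then 1 else 0) + (if sk_adj V E k (Inl u) j then 1/2 else 0)))"
        unfolding p0_def lap_lin4 ia jb g[OF a, rule_format, OF u] g[OF b, rule_format, OF u] using kpos by (simp add: field_simps)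
    qed
    have "resistance (sk_verts V E k) (sk_adj V E k) i j
       = psi p0 (\<lambda>w. (if w = i then 1/2 else 0) - (if w = j then 1/2 else 0)) i
       - psi p0 (\<lambda>w. (if w = i then 1/2 else 0) - (if w = j then 1/2 else 0)) j"
      by (rule S_res[OF assms(1,2,3) ij hp])
    also have "\<dots> = p0 a - p0 b" unfolding ia jb psi_Inl ..
    also have "\<dots> = 2 / real k * resistance V E a b" unfolding p0_def resG[OF a b] by (simp add: algebra_simps)
    finally show "resistance (sk_verts V E k) (sk_adj V E k) i j = 2 / real k * resistance V E a b" .
  next
    fix s t b assume inew: "i \<in> sk_new V E k" and b: "b \<in> V" and jb: "j = Inl b"
      and nb: "{w. sk_adj V E k i w} = {Inl s, Inl t}"
    note info = new_info[OF assms(1) inew nb]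
    have st: "s \<noteq> t" and s: "s \<in> V" and t: "t \<in> V" and adj: "\<And>u. sk_adj V E k (Inl u) i \<longleftrightarrow> u = s \<or> u = t"
      using info by blast+
    obtain r0 where ir: "i = Inr ({s,t}, r0)" using info by blast
    define p0 where "p0 = (\<lambda>u. 1 / real k * g s u + 1 / real k * g t u + (- 2 / real k) * g b u + 0 * g b u)"
    have hp: "\<forall>u\<in>V. laplacian V E p0 u = 2 / real k *
       (((if Inl u = i then 1 else 0) + (if sk_adj V E k (Inl u) i then 1/2 else 0))
      - ((if Inl u = j then 1 else 0) + (if sk_adj V E k (Inl u) j then 1/2 else 0)))"
    proof
      fix u assume u: "u \<in> V"
      have "(if sk_adj V E k (Inl u) i then 1/2 else 0) = (if u = s then 1/2 else 0) + (if u = t then (1/2::real) else 0)"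
        unfolding adj using st by auto
      then show "laplacian V E p0 u = 2 / real k *
       (((if Inl u = i then 1 else 0) + (if sk_adj V E k (Inl u) i then 1/2 else 0))
      - ((if Inl u = j then 1 else 0) + (if sk_adj V E k (Inl u) j then 1/2 else 0)))"
        unfolding p0_def lap_lin4 jb g[OF s, rule_format, OF u] g[OF t, rule_format, OF u] g[OF b, rule_format, OF u] using kpos ir st by (simp add: field_simps)
    qed
    have "resistance (sk_verts V E k) (sk_adj V E k) i j
       = psi p0 (\<lambda>w. (if w = i then 1/2 else 0) - (if w = j then 1/2 else 0)) i
       - psi p0 (\<lambda>w. (if w = i then 1/2 else 0) - (if w = j then 1/2 else 0)) j"
      by (rule S_res[OF assms(1,2,3) ij hp])
    also have "\<dots> = (p0 s + p0 t) / 2 + 1/2 - p0 b" using st unfolding jb ir psi_Inl psi_Inr by simp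
    also have "\<dots> = 1/2 + (1 / real k) * ((g s s + g t s - 2 * g b s + g s t + g t t - 2 * g b t) / 2
        - (g s b + g t b - 2 * g b b))"
      unfolding p0_def by (simp add: algebra_simps)
    also have "\<dots> = 1/2 + (1 / real k) * ((2 * resistance V E s b + 2 * resistance V E t b - resistance V E s t) / 2)"
    proof -
      have "(g s s + g t s - 2 * g b s + g s t + g t t - 2 * g b t) / 2 - (g s b + g t b - 2 * g b b)
         = (2 * resistance V E s b + 2 * resistance V E t b - resistance V E s t) / 2"
        unfolding resG[OF s b] resG[OF t b] resG[OF s t] by (simp add: field_simps)
      then show ?thesis by (rule arg_cong[where f="\<lambda>z. 1/2 + (1 / real k) * z"])
    qed
    also have "\<dots> = (real k + 2 * resistance V E s b + 2 * resistance V E t b - resistance V E s t) / (2 * real k)"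
      using kpos by (simp add: field_simps)
    finally show "resistance (sk_verts V E k) (sk_adj V E k) i j =
       (real k + 2 * resistance V E s b + 2 * resistance V E t b - resistance V E s t) / (2 * real k)" .
  next
    fix s t p q assume inew: "i \<in> sk_new V E k" and jnew: "j \<in> sk_new V E k"
      and nbi: "{w. sk_adj V E k i w} = {Inl s, Inl t}" and nbj: "{w. sk_adj V E k j w} = {Inl p, Inl q}"
    note infoi = new_info[OF assms(1) inew nbi]
    note infoj = new_info[OF assms(1) jnew nbj]
    have st: "s \<noteq> t" and s: "s \<in> V" and t: "t \<in> V" and adji: "\<And>u. sk_adj V E k (Inl u) i \<longleftrightarrow> u = s \<or> u = t"
      using infoi by blast+
    have pq: "p \<noteq> q" and p: "p \<in> V" and q: "q \<in> V" and adjj: "\<And>u. sk_adj V E k (Inl u) j \<longleftrightarrow> u = p \<or> u = q"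
      using infoj by blast+
    obtain r1 where ir: "i = Inr ({s,t}, r1)" using infoi by blast
    obtain r2 where jr: "j = Inr ({p,q}, r2)" using infoj by blast
    have inj: "i \<noteq> j" by (rule assms(6))
    define p0 where "p0 = (\<lambda>u. 1 / real k * g s u + 1 / real k * g t u + (- 1 / real k) * g p u + (- 1 / real k) * g q u)"
    have hp: "\<forall>u\<in>V. laplacian V E p0 u = 2 / real k *
       (((if Inl u = i then 1 else 0) + (if sk_adj V E k (Inl u) i then 1/2 else 0))
      - ((if Inl u = j then 1 else 0) + (if sk_adj V E k (Inl u) j then 1/2 else 0)))"
    proof
      fix u assume u: "u \<in> V"
      have 1: "(if sk_adj V E k (Inl u) i then 1/2 else 0) = (if u = s then 1/2 else 0) + (if u = t then (1/2::real) else 0)"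
        unfolding adji using st by auto
      have 2: "(if sk_adj V E k (Inl u) j then 1/2 else 0) = (if u = p then 1/2 else 0) + (if u = q then (1/2::real) else 0)"
        unfolding adjj using pq by auto
      show "laplacian V E p0 u = 2 / real k *
       (((if Inl u = i then 1 else 0) + (if sk_adj V E k (Inl u) i then 1/2 else 0))
      - ((if Inl u = j then 1 else 0) + (if sk_adj V E k (Inl u) j then 1/2 else 0)))"
        unfolding p0_def lap_lin4 1 2 g[OF s, rule_format, OF u] g[OF t, rule_format, OF u] g[OF p, rule_format, OF u] g[OF q, rule_format, OF u] using kpos ir jr st pq by (simp add: field_simps)
    qed
    have "resistance (sk_verts V E k) (sk_adj V E k) i j
       = psi p0 (\<lambda>w. (if w = i then 1/2 else 0) - (if w = j then 1/2 else 0)) i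
       - psi p0 (\<lambda>w. (if w = i then 1/2 else 0) - (if w = j then 1/2 else 0)) j"
      by (rule S_res[OF assms(1,2,3) ij hp])
    also have "\<dots> = ((p0 s + p0 t) / 2 + 1/2) - ((p0 p + p0 q) / 2 - 1/2)"
    proof -
      have "psi p0 (\<lambda>w. (if w = i then 1/2 else 0) - (if w = j then 1/2 else 0)) i = (p0 s + p0 t) / 2 + 1/2"
        using st inj unfolding psi_Inr ir by simp
      moreover have "psi p0 (\<lambda>w. (if w = i then 1/2 else 0) - (if w = j then 1/2 else 0)) j = (p0 p + p0 q) / 2 - 1/2"
        using pq inj unfolding psi_Inr jr by simp
      ultimately show ?thesis by simp
    qed
    also have "\<dots> = 1 + (1 / real k) * ((g s s + g t s - g p s - g q s + g s t + g t t - g p t - g q t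
         - (g s p + g t p - g p p - g q p) - (g s q + g t q - g p q - g q q)) / 2)"
      using kpos unfolding p0_def by (simp add: field_simps)
    also have "\<dots> = 1 + (1 / real k) * ((resistance V E s p + resistance V E s q + resistance V E t p
                 + resistance V E t q - resistance V E p q - resistance V E s t) / 2)"
    proof -
      have "(g s s + g t s - g p s - g q s + g s t + g t t - g p t - g q t
         - (g s p + g t p - g p p - g q p) - (g s q + g t q - g p q - g q q)) / 2
         = (resistance V E s p + resistance V E s q + resistance V E t p
                 + resistance V E t q - resistance V E p q - resistance V E s t) / 2"
        unfolding resG[OF s p] resG[OF s q] resG[OF t p] resG[OF t q] resG[OF p q] resG[OF s t]
        by (simp add: field_simps)
      then show ?thesis by (rule arg_cong[where f="\<lambda>z. 1 + (1 / real k) * z"])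
    qed
    also have "\<dots> = (2 * real k + resistance V E s p + resistance V E s q + resistance V E t p
                 + resistance V E t q - resistance V E p q - resistance V E s t) / (2 * real k)"
      using kpos by (simp add: field_simps)
    finally show "resistance (sk_verts V E k) (sk_adj V E k) i j =
              (2 * real k + resistance V E s p + resistance V E s q + resistance V E t p
                 + resistance V E t q - resistance V E p q - resistance V E s t)
                / (2 * real k)" .
  qed
qed

end
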